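(* Let $G$ be a finite group with $|G|\ge3$ and let $\mathcal C=\mathcal C(\mathcal B(G),\mathcal F(G))$. Then (1) $\mathsf D(G)\le\omega(G)\le\mathsf D(G)+\mathsf d(\mathcal C)$; (2) $\mathsf D(G/G')\le\mathsf D(\mathcal C)$, with equality if $G$ is abelian.
   Context: For a finite group $G$ (multiplicative, identity $1_G$, commutator subgroup $G'$), $\mathcal F(G)$ is the free abelian monoid with basis $G$ (sequences $S=g_1\boldsymbol{\cdot}\ldots\boldsymbol{\cdot}g_\ell$, operation $\boldsymbol{\cdot}$, length $|S|=\ell$). $\pi(S)=\{g_{\tau(1)}\cdots g_{\tau(\ell)}:\tau\text{ a permutation of }[1,\ell]\}$, $\pi$ of the empty sequence is $\{1_G\}$, $\mathcal B(G)=\{S\in\mathcal F(G):1_G\in\pi(S)\}$, $\mathcal A(G)$ its set of atoms, and $\mathsf D(G)=\max\{|U|:U\in\mathcal A(G)\}$ (applied to the group $G/G'$ this defines $\mathsf D(G/G')$). For $S,S'\in\mathcal F(G)$, $S\sim S'$ means: for all $T\in\mathcal F(G)$, $S\boldsymbol{\cdot}T\in\mathcal B(G)\iff S'\boldsymbol{\cdot}T\in\mathcal B(G)$; the classes form the class semigroup $\mathcal C(\mathcal B(G),\mathcal F(G))$, written additively with $[S]+[T]=[S\boldsymbol{\cdot}T]$. For an atomic monoid $H$ and $b\in H$, $\omega(H,b)$ is the smallest $N\in\mathbb N_0\cup\{\infty\}$ such that whenever $b\mid a_1\cdots a_n$ in $H$ ($a_i\in H$) there is $\Omega\subset[1,n]$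 with $|\Omega|\le N$ and $b\mid\prod_{\nu\in\Omega}a_\nu$ in $H$; $\omega(H)=\sup\{\omega(H,u):u\in\mathcal A(H)\}$ and $\omega(G)=\omega(\mathcal B(G))$. For an additive commutative semigroup $\mathcal C$ with zero (empty sums equal $0$): $\mathsf d(\mathcal C)$ is the smallest $d\in\mathbb N_0\cup\{\infty\}$ such that for all $c_1,\dots,c_n\in\mathcal C$ there is $\Omega\subset[1,n]$, $|\Omega|\le d$, with $\sum_{\nu=1}^n c_\nu=\sum_{\nu\in\Omega}c_\nu$; $\mathsf D(\mathcal C)$ is the smallest $\ell\in\mathbb N\cup\{\infty\}$ such that for all $n\ge\ell$ and $c_1,\dots,c_n\in\mathcal C$ there is $\Omega\subsetneq[1,n]$ with $\sum_{\nu=1}^n c_\nu=\sum_{\nu\in\Omega}c_\nu$. *)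

theory Defs
  imports "HOL-Algebra.Algebra" "HOL-Library.Multiset" "HOL-Library.Extended_Nat"
begin

definition seqs :: "('a, 'b) monoid_scheme \<Rightarrow> 'a multiset set" where
  "seqs G = {S. set_mset S \<subseteq> carrier G}"

definition prods :: "('a, 'b) monoid_scheme \<Rightarrow> 'a multiset \<Rightarrow> 'a set" where
  "prods G S = {foldr (\<lambda>x y. x \<otimes>\<^bsub>G\<^esub> y) xs \<one>\<^bsub>G\<^esub> | xs. mset xs = S}"

definition prod_one_seqs :: "('a, 'b) monoid_scheme \<Rightarrow> 'a multiset set" where
  "prod_one_seqs G = {S \<in> seqs G. \<one>\<^bsub>G\<^esub> \<in> prods G S}"

text \<open>Atoms of the monoid B(G) (its only unit is the empty sequence).\<close>
definition atoms :: "('a, 'b) monoid_scheme \<Rightarrow> 'a multiset set" where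
  "atoms G = {U \<in> prod_one_seqs G. U \<noteq> {#} \<and>
      (\<forall>A \<in> prod_one_seqs G. \<forall>B \<in> prod_one_seqs G. U = A + B \<longrightarrow> A = {#} \<or> B = {#})}"

definition davenport :: "('a, 'b) monoid_scheme \<Rightarrow> enat" where
  "davenport G = Sup ((\<lambda>U. enat (size U)) ` atoms G)"

definition bdvd :: "('a, 'b) monoid_scheme \<Rightarrow> 'a multiset \<Rightarrow> 'a multiset \<Rightarrow> bool" where
  "bdvd G b a \<longleftrightarrow> (\<exists>c \<in> prod_one_seqs G. a = b + c)"

definition omega_elem :: "('a, 'b) monoid_scheme \<Rightarrow> 'a multiset \<Rightarrow> enat" where
  "omega_elem G b = Inf {N :: enat. \<forall>as :: 'a multiset list.
      set as \<subseteq> prod_one_seqs G \<and> bdvd G b (sum_list as) \<longrightarrow>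
      (\<exists>\<Omega> \<subseteq> {..<length as}. enat (card \<Omega>) \<le> N \<and> bdvd G b (\<Sum>i\<in>\<Omega>. as ! i))}"

definition omega_grp :: "('a, 'b) monoid_scheme \<Rightarrow> enat" where
  "omega_grp G = Sup (omega_elem G ` atoms G)"

definition seq_equiv :: "('a, 'b) monoid_scheme \<Rightarrow> 'a multiset \<Rightarrow> 'a multiset \<Rightarrow> bool" where
  "seq_equiv G S S' \<longleftrightarrow> (\<forall>T \<in> seqs G. S + T \<in> prod_one_seqs G \<longleftrightarrow> S' + T \<in> prod_one_seqs G)"

definition seq_class :: "('a, 'b) monoid_scheme \<Rightarrow> 'a multiset \<Rightarrow> 'a multiset set" where
  "seq_class G S = {S' \<in> seqs G. seq_equiv G S S'}"

definition class_sg :: "('a, 'b) monoid_scheme \<Rightarrow> 'a multiset set set" where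
  "class_sg G = seq_class G ` seqs G"

definition class_add :: "('a, 'b) monoid_scheme \<Rightarrow> 'a multiset set \<Rightarrow> 'a multiset set \<Rightarrow> 'a multiset set" where
  "class_add G A B = seq_class G ((SOME s. s \<in> A) + (SOME t. t \<in> B))"

definition class_zero :: "('a, 'b) monoid_scheme \<Rightarrow> 'a multiset set" where
  "class_zero G = seq_class G {#}"

text \<open>A commutative semigroup with zero is given by carrier C, addition plus_op, zero z.
  The sum of a list (empty sum = z), and the subsum indexed by a set of positions.\<close>
definition gsum :: "('c \<Rightarrow> 'c \<Rightarrow> 'c) \<Rightarrow> 'c \<Rightarrow> 'c list \<Rightarrow> 'c" where
  "gsum plus_op z cs = foldr plus_op cs z"

definition subsum :: "('c \<Rightarrow> 'c \<Rightarrow> 'c) \<Rightarrow> 'c \<Rightarrow> 'c list \<Rightarrow> nat set \<Rightarrow> 'c" where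
  "subsum plus_op z cs \<Omega> = gsum plus_op z (map (\<lambda>i. cs ! i) (sorted_list_of_set \<Omega>))"

definition small_dav :: "'c set \<Rightarrow> ('c \<Rightarrow> 'c \<Rightarrow> 'c) \<Rightarrow> 'c \<Rightarrow> enat" where
  "small_dav C plus_op z = Inf {d :: enat. \<forall>cs. set cs \<subseteq> C \<longrightarrow>
      (\<exists>\<Omega> \<subseteq> {..<length cs}. enat (card \<Omega>) \<le> d \<and> gsum plus_op z cs = subsum plus_op z cs \<Omega>)}"

definition large_dav :: "'c set \<Rightarrow> ('c \<Rightarrow> 'c \<Rightarrow> 'c) \<Rightarrow> 'c \<Rightarrow> enat" where
  "large_dav C plus_op z = Inf {l :: enat. l \<ge> 1 \<and> (\<forall>cs. set cs \<subseteq> C \<and> enat (length cs) \<ge> l \<longrightarrow>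
      (\<exists>\<Omega> \<subset> {..<length cs}. gsum plus_op z cs = subsum plus_op z cs \<Omega>))}"

end

theory Submission
  imports Defs
begin

definition plist :: "('a, 'b) monoid_scheme \<Rightarrow> 'a list \<Rightarrow> 'a" where
  "plist G xs = foldr (\<lambda>x y. x \<otimes>\<^bsub>G\<^esub> y) xs \<one>\<^bsub>G\<^esub>"

lemma plist_Nil[simp]: "plist G [] = \<one>\<^bsub>G\<^esub>" by (simp add: plist_def)
lemma plist_Cons[simp]: "plist G (x # xs) = x \<otimes>\<^bsub>G\<^esub> plist G xs" by (simp add: plist_def)

lemma prods_alt: "prods G S = {plist G xs | xs. mset xs = S}"
  by (simp add: prods_def plist_def)

lemma mem_B: "S \<in> prod_one_seqs G \<longleftrightarrow> set_mset S \<subseteq> carrier G \<and> (\<exists>xs. mset xs = S \<and> plist G xs = \<one>\<^bsub>G\<^esub>)"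
  by (auto simp: prod_one_seqs_def seqs_def prods_alt) metis

lemma B_seqs: "S \<in> prod_one_seqs G \<Longrightarrow> set_mset S \<subseteq> carrier G"
  by (simp add: mem_B)

context group begin

lemma plist_closed[simp]: "set xs \<subseteq> carrier G \<Longrightarrow> plist G xs \<in> carrier G"
  by (induction xs) auto

lemma plist_append: "set xs \<subseteq> carrier G \<Longrightarrow> set ys \<subseteq> carrier G \<Longrightarrow>
   plist G (xs @ ys) = plist G xs \<otimes> plist G ys"
  by (induction xs) (auto simp: m_assoc)

lemma plist_rev_inv: "set xs \<subseteq> carrier G \<Longrightarrow> plist G (rev (map (\<lambda>x. inv x) xs)) = inv (plist G xs)"
  proof (induction xs)
  case (Cons a xs)
  have "plist G (rev (map (\<lambda>x. inv x) (a#xs))) = plist G (rev (map (\<lambda>x. inv x) xs)) \<otimes> plist G [inv a]"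
    using Cons.prems plist_append[of "rev (map (\<lambda>x. inv x) xs)" "[inv a]"] by auto
  also have "\<dots> = inv (plist G xs) \<otimes> inv a" using Cons by simp
  finally show ?case using Cons.prems by (simp add: inv_mult_group)
qed simp

lemma B_empty[simp]: "{#} \<in> prod_one_seqs G"
  by (auto simp: mem_B intro!: exI[of _ "[]"])

lemma B_add: "S \<in> prod_one_seqs G \<Longrightarrow> T \<in> prod_one_seqs G \<Longrightarrow> S + T \<in> prod_one_seqs G"
proof -
  assume S: "S \<in> prod_one_seqs G" and T: "T \<in> prod_one_seqs G"
  then obtain xs ys where "mset xs = S" "plist G xs = \<one>" "mset ys = T" "plist G ys = \<one>"
    by (auto simp: mem_B)
  moreover have "set xs \<subseteq> carrier G" "set ys \<subseteq> carrier G" using S T calculation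
    by (auto simp: mem_B)
  ultimately show ?thesis using S T
    by (auto simp: mem_B plist_append intro!: exI[of _ "xs @ ys"])
qed

lemma B_pair: "x \<in> carrier G \<Longrightarrow> {#x, inv x#} \<in> prod_one_seqs G"
  by (auto simp: mem_B intro!: exI[of _ "[x, inv x]"])

lemma B_inv: "S \<in> prod_one_seqs G \<Longrightarrow> image_mset (\<lambda>x. inv x) S \<in> prod_one_seqs G"
proof -
  assume S: "S \<in> prod_one_seqs G"
  then obtain xs where xs: "mset xs = S" "plist G xs = \<one>" by (auto simp: mem_B)
  have c: "set xs \<subseteq> carrier G" using S xs by (auto simp: mem_B)
  show ?thesis using S xs c
    by (auto simp: mem_B plist_rev_inv intro!: exI[of _ "rev (map (\<lambda>x. inv x) xs)"])
qed

lemma B_RinvR: "set_mset R \<subseteq> carrier G \<Longrightarrow> R + image_mset (\<lambda>x. inv x) R \<in> prod_one_seqs G"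
proof (induction R)
  case empty then show ?case by simp
next
  case (add x R)
  have "add_mset x R + image_mset (\<lambda>x. inv x) (add_mset x R) = {#x, inv x#} + (R + image_mset (\<lambda>x. inv x) R)"
    by simp
  moreover have "{#x, inv x#} + (R + image_mset (\<lambda>x. inv x) R) \<in> prod_one_seqs G"
    using add.prems by (intro B_add B_pair add.IH) auto
  then show ?case by (simp add: add_mset_commute)
qed

lemma B_single: "{#x#} \<in> prod_one_seqs G \<Longrightarrow> x = \<one>"
  by (auto simp: mem_B)

end


lemma image_mset_sum: "image_mset f (\<Sum>i\<in>I. M i) = (\<Sum>i\<in>I. image_mset f (M i))"
  by (induction I rule: infinite_finite_induct) auto

lemma mset_map_upt: "mset (map f [0..<n]) = (\<Sum>i<n. {#f i#})"
  by (induction n) auto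

lemma mset_sum_nth: "mset xs = (\<Sum>i<length xs. {#xs!i#})"
  using mset_map_upt[of "nth xs" "length xs"] by (simp add: map_nth)

lemma atomD: "u \<in> atoms G \<Longrightarrow> A \<in> prod_one_seqs G \<Longrightarrow> B \<in> prod_one_seqs G \<Longrightarrow> u = A + B
   \<Longrightarrow> A = {#} \<or> B = {#}"
  by (auto simp: atoms_def)

context group begin

lemma inv_inv_mset: "set_mset A \<subseteq> carrier G \<Longrightarrow>
   image_mset (\<lambda>x. inv x) (image_mset (\<lambda>x. inv x) A) = A"
proof -
  assume "set_mset A \<subseteq> carrier G"
  then have "image_mset ((\<lambda>x. inv x) \<circ> (\<lambda>x. inv x)) A = image_mset id A"
    by (intro image_mset_cong) auto
  then show ?thesis by (simp add: image_mset.compositionality)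
qed

lemma sum_list_pairs: "sum_list (map (\<lambda>x. {#x, inv x#}) xs) = mset xs + image_mset (\<lambda>x. inv x) (mset xs)"
  by (induction xs) auto

lemma omega_elem_ge:
  assumes u: "u \<in> atoms G" and s: "size u \<ge> 3"
  shows "enat (size u) \<le> omega_elem G u"
proof -
  have uB: "u \<in> prod_one_seqs G" using u by (simp add: atoms_def)
  then obtain xs where xs: "mset xs = u" "plist G xs = \<one>" and xc: "set xs \<subseteq> carrier G"
    by (auto simp: mem_B)
  define n where "n = length xs"
  have n: "n = size u" using xs(1)[symmetric] by (simp add: n_def)
  define as where "as = map (\<lambda>x. {#x, inv x#}) xs"
  have asB: "set as \<subseteq> prod_one_seqs G" using xc by (auto simp: as_def intro!: B_pair)
  have "bdvd G u (sum_list as)"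
    unfolding bdvd_def as_def sum_list_pairs using xs B_inv[OF uB] by auto
  show ?thesis unfolding omega_elem_def
  proof (rule Inf_greatest, clarify)
    fix N :: enat
    assume "\<forall>as. set as \<subseteq> prod_one_seqs G \<and> bdvd G u (sum_list as) \<longrightarrow>
          (\<exists>\<Omega>\<subseteq>{..<length as}. enat (card \<Omega>) \<le> N \<and> bdvd G u (\<Sum>i\<in>\<Omega>. as ! i))"
    then obtain \<Omega> where \<Omega>: "\<Omega> \<subseteq> {..<n}" "enat (card \<Omega>) \<le> N" "bdvd G u (\<Sum>i\<in>\<Omega>. as ! i)"
    proof -
      from \<open>\<forall>as. _\<close>[rule_format, of as] asB \<open>bdvd G u (sum_list as)\<close>
      obtain \<Omega> where "\<Omega>\<subseteq>{..<length as}" "enat (card \<Omega>) \<le> N" "bdvd G u (\<Sum>i\<in>\<Omega>. as ! i)"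
        by blast
      then show ?thesis using that by (simp add: as_def n_def)
    qed
    have "card \<Omega> \<ge> n"
    proof (rule ccontr)
      assume "\<not> card \<Omega> \<ge> n"
      then have "\<Omega> \<noteq> {..<n}" by auto
      then obtain j where j: "j < n" "j \<notin> \<Omega>" using \<Omega>(1) by auto
      define A where "A = (\<Sum>i\<in>\<Omega>. {#xs!i#})"
      define R where "R = (\<Sum>i\<in>{..<n}-\<Omega>. {#xs!i#})"
      have fin: "finite \<Omega>" using \<Omega>(1) finite_subset by blast
      have uAR: "u = A + R"
        using mset_sum_nth[of xs] sum.subset_diff[OF \<Omega>(1), of "\<lambda>i. {#xs!i#}"] xs
        unfolding A_def R_def n_def by (simp add: add.commute)
      have Rne: "R \<noteq> {#}"
      proof -
        have "{#xs!j#} \<subseteq># R" unfolding R_def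
          using sum.remove[of "{..<n}-\<Omega>" j "\<lambda>i. {#xs!i#}"] j by auto
        then show ?thesis by auto
      qed
      have Ac: "set_mset A \<subseteq> carrier G" "set_mset R \<subseteq> carrier G"
        using uAR xs xc by (metis Un_subset_iff set_mset_mset set_mset_union)+
      have "(\<Sum>i\<in>\<Omega>. as ! i) = (\<Sum>i\<in>\<Omega>. {#xs!i#} + {#inv (xs!i)#})"
        using \<Omega>(1) by (intro sum.cong) (auto simp: as_def n_def)
      also have "\<dots> = A + image_mset (\<lambda>x. inv x) A"
        unfolding A_def image_mset_sum sum.distrib by simp
      finally have sA: "(\<Sum>i\<in>\<Omega>. as ! i) = A + image_mset (\<lambda>x. inv x) A" .
      obtain c where c: "c \<in> prod_one_seqs G" "(\<Sum>i\<in>\<Omega>. as ! i) = u + c"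
        using \<Omega>(3) by (auto simp: bdvd_def)
      have "A + image_mset (\<lambda>x. inv x) A = A + (R + c)" using sA c uAR by (simp add: add.assoc)
      then have AR: "image_mset (\<lambda>x. inv x) A = R + c" by simp
      have cc: "set_mset c \<subseteq> carrier G" using c B_seqs by auto
      have "A = image_mset (\<lambda>x. inv x) (R + c)"
        using arg_cong[OF AR, of "image_mset (\<lambda>x. inv x)"] inv_inv_mset[OF Ac(1)] by simp
      then have u2: "u = (R + image_mset (\<lambda>x. inv x) R) + image_mset (\<lambda>x. inv x) c"
        using uAR by (simp add: add_ac)
      have "R + image_mset (\<lambda>x. inv x) R = {#} \<or> image_mset (\<lambda>x. inv x) c = {#}"
        by (rule atomD[OF u B_RinvR[OF Ac(2)] B_inv[OF c(1)] u2])
      then have u3: "u = R + image_mset (\<lambda>x. inv x) R" using Rne u2 by auto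
      then have "size R \<ge> 2" using s by simp
      then obtain r R' where rR: "R = add_mset r R'" "R' \<noteq> {#}"
        by (metis Rne multiset_cases size_empty size_single One_nat_def le_numeral_Suc
             numeral_One numeral_le_one_iff semiring_norm(69) pred_numeral_simps(2) size_add_mset
             not_less_eq_eq)
      have rc: "r \<in> carrier G" "set_mset R' \<subseteq> carrier G" using Ac(2) rR by auto
      have "u = {#r, inv r#} + (R' + image_mset (\<lambda>x. inv x) R')" using u3 rR by simp
      from atomD[OF u B_pair[OF rc(1)] B_RinvR[OF rc(2)] this] rR(2) show False by simp
    qed
    then show "enat (size u) \<le> N" using \<Omega>(2) n by (metis enat_ord_simps(1) order_trans)
  qed
qed

end


context group begin

lemma exists_atom3:
  assumes "finite (carrier G)" "card (carrier G) \<ge> 3"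
  shows "\<exists>u0 \<in> atoms G. size u0 = 3"
proof -
  have "\<not> carrier G \<subseteq> {\<one>}"
    using assms card_mono[of "{\<one>}" "carrier G"] by auto
  then obtain g where g: "g \<in> carrier G" "g \<noteq> \<one>" by auto
  have "\<not> carrier G \<subseteq> {\<one>, inv g}"
  proof
    assume "carrier G \<subseteq> {\<one>, inv g}"
    then have "card (carrier G) \<le> card {\<one>, inv g}" by (intro card_mono) auto
    also have "\<dots> \<le> 2" by (simp add: card_insert_if)
    finally show False using assms by simp
  qed
  then obtain h where h: "h \<in> carrier G" "h \<noteq> \<one>" "h \<noteq> inv g" by auto
  have gh: "g \<otimes> h \<noteq> \<one>" using g h inv_equality[of g h] inv_inv[of h] by auto
  have ghi: "inv (g \<otimes> h) \<noteq> \<one>" using gh g h by (metis inv_one inv_inv m_closed)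
  define u0 where "u0 = {#g, h, inv (g \<otimes> h)#}"
  have u0B: "u0 \<in> prod_one_seqs G"
    unfolding mem_B u0_def using g h
    by (auto intro!: exI[of _ "[g, h, inv (g \<otimes> h)]"] simp: m_assoc[symmetric])
  have "u0 \<in> atoms G"
    unfolding atoms_def
  proof (intro CollectI conjI ballI impI u0B)
    show "u0 \<noteq> {#}" by (simp add: u0_def)
    fix A B assume AB: "A \<in> prod_one_seqs G" "B \<in> prod_one_seqs G" "u0 = A + B"
    show "A = {#} \<or> B = {#}"
    proof (rule ccontr)
      assume ne: "\<not> (A = {#} \<or> B = {#})"
      have sz: "size A + size B = 3" using arg_cong[OF AB(3), of size] by (simp add: u0_def)
      have "\<exists>x. x \<in># u0 \<and> {#x#} \<in> prod_one_seqs G"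
      proof (cases "size A = 1")
        case True
        then obtain x where "A = {#x#}" using size_1_singleton_mset by blast
        then show ?thesis using AB by auto
      next
        case False
        then have "size B = 1" using sz ne by (cases "size A"; cases "size B") auto
        then obtain x where "B = {#x#}" using size_1_singleton_mset by blast
        then show ?thesis using AB by auto
      qed
      then obtain x where "x \<in># u0" "x = \<one>" using B_single by blast
      then show False using g h ghi by (auto simp: u0_def)
    qed
  qed
  then show ?thesis by (auto simp: u0_def intro!: bexI)
qed

lemma dav_le_omega:
  assumes "finite (carrier G)" "card (carrier G) \<ge> 3"
  shows "davenport G \<le> omega_grp G"
proof -
  obtain u0 where u0: "u0 \<in> atoms G" "size u0 = 3" using exists_atom3[OF assms] by blast
  have o0: "3 \<le> omega_grp G"
    using omega_elem_ge[OF u0(1)] u0(2) SUP_upper[OF u0(1), of "omega_elem G"]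
    unfolding omega_grp_def by (metis order_refl order_trans numeral_eq_enat)
  show ?thesis unfolding davenport_def
  proof (rule SUP_least)
    fix U assume U: "U \<in> atoms G"
    show "enat (size U) \<le> omega_grp G"
    proof (cases "size U \<ge> 3")
      case True
      then show ?thesis using omega_elem_ge[OF U] SUP_upper[OF U, of "omega_elem G"]
        unfolding omega_grp_def by (metis order_trans)
    next
      case False
      then have "enat (size U) \<le> 3" by (simp add: numeral_eq_enat)
      then show ?thesis using o0 by (metis order_trans)
    qed
  qed
qed

end


lemma seqs_iff: "S \<in> seqs G \<longleftrightarrow> set_mset S \<subseteq> carrier G" by (simp add: seqs_def)

lemma seqs_add[simp]: "S \<in> seqs G \<Longrightarrow> T \<in> seqs G \<Longrightarrow> S + T \<in> seqs G"
  by (auto simp: seqs_def)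

lemma seqs_empty[simp]: "{#} \<in> seqs G" by (simp add: seqs_def)

lemma B_in_seqs: "S \<in> prod_one_seqs G \<Longrightarrow> S \<in> seqs G"
  by (simp add: prod_one_seqs_def)

lemma seqs_sum: "(\<And>i. i \<in> I \<Longrightarrow> f i \<in> seqs G) \<Longrightarrow> (\<Sum>i\<in>I. f i) \<in> seqs G"
  by (induction I rule: infinite_finite_induct) auto

lemma seqs_sum_list: "(\<And>x. x \<in> set xs \<Longrightarrow> f x \<in> seqs G) \<Longrightarrow> sum_list (map f xs) \<in> seqs G"
  by (induction xs) auto

lemma seq_equiv_refl: "seq_equiv G S S" by (simp add: seq_equiv_def)
lemma seq_equiv_sym: "seq_equiv G S T \<Longrightarrow> seq_equiv G T S" by (simp add: seq_equiv_def)
lemma seq_equiv_trans: "seq_equiv G S T \<Longrightarrow> seq_equiv G T U \<Longrightarrow> seq_equiv G S U"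
  by (simp add: seq_equiv_def)

lemma seq_class_eq_iff:
  assumes "S \<in> seqs G" "S' \<in> seqs G"
  shows "seq_class G S = seq_class G S' \<longleftrightarrow> seq_equiv G S S'"
proof
  assume "seq_class G S = seq_class G S'"
  then have "S' \<in> seq_class G S" using assms seq_equiv_refl unfolding seq_class_def by blast
  then show "seq_equiv G S S'" by (simp add: seq_class_def)
next
  assume "seq_equiv G S S'"
  then show "seq_class G S = seq_class G S'" unfolding seq_class_def
    by (blast intro: seq_equiv_trans seq_equiv_sym)
qed

lemma seq_equiv_cong:
  assumes "T \<in> seqs G" "T' \<in> seqs G" "seq_equiv G S S'" "seq_equiv G T T'" "S' \<in> seqs G"
  shows "seq_equiv G (S + T) (S' + T')"
  unfolding seq_equiv_def
proof (intro ballI)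
  fix Y assume X: "Y \<in> seqs G"
  have "S + T + Y \<in> prod_one_seqs G \<longleftrightarrow> S' + (T + Y) \<in> prod_one_seqs G"
    using assms(3) X assms(1) unfolding seq_equiv_def by (simp add: add.assoc)
  also have "\<dots> \<longleftrightarrow> T + (S' + Y) \<in> prod_one_seqs G" by (simp add: add_ac)
  also have "\<dots> \<longleftrightarrow> T' + (S' + Y) \<in> prod_one_seqs G"
    using assms(4) X assms(5) unfolding seq_equiv_def by auto
  finally show "S + T + Y \<in> prod_one_seqs G \<longleftrightarrow> S' + T' + Y \<in> prod_one_seqs G"
    by (simp add: add_ac)
qed

lemma seq_equiv_B: "seq_equiv G S S' \<Longrightarrow> S \<in> prod_one_seqs G \<longleftrightarrow> S' \<in> prod_one_seqs G"
  unfolding seq_equiv_def by (metis add.right_neutral seqs_empty)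

lemma class_add_eq:
  assumes "S \<in> seqs G" "T \<in> seqs G"
  shows "class_add G (seq_class G S) (seq_class G T) = seq_class G (S + T)"
proof -
  have S: "S \<in> seq_class G S" and T: "T \<in> seq_class G T"
    using assms seq_equiv_refl by (auto simp: seq_class_def)
  define s where "s = (SOME s. s \<in> seq_class G S)"
  define t where "t = (SOME t. t \<in> seq_class G T)"
  have s: "s \<in> seqs G" "seq_equiv G S s" using someI[of "\<lambda>s. s \<in> seq_class G S", OF S]
    by (auto simp: s_def seq_class_def)
  have t: "t \<in> seqs G" "seq_equiv G T t" using someI[of "\<lambda>s. s \<in> seq_class G T", OF T]
    by (auto simp: t_def seq_class_def)
  have "seq_class G (s + t) = seq_class G (S + T)"
    using seq_class_eq_iff[of "s + t" G "S + T"] s t assms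
      seq_equiv_cong[OF t(1) assms(2) seq_equiv_sym[OF s(2)] seq_equiv_sym[OF t(2)] assms(1)] by simp
  then show ?thesis by (simp add: class_add_def s_def t_def)
qed

lemma gsum_classes:
  assumes "\<And>x. x \<in> set xs \<Longrightarrow> f x \<in> seqs G"
  shows "gsum (class_add G) (class_zero G) (map (\<lambda>i. seq_class G (f i)) xs)
     = seq_class G (sum_list (map f xs))"
  using assms
proof (induction xs)
  case Nil then show ?case by (simp add: gsum_def class_zero_def)
next
  case (Cons a xs)
  have "gsum (class_add G) (class_zero G) (map (\<lambda>i. seq_class G (f i)) (a # xs))
     = class_add G (seq_class G (f a)) (gsum (class_add G) (class_zero G) (map (\<lambda>i. seq_class G (f i)) xs))"
    by (simp add: gsum_def)
  also have "\<dots> = seq_class G (f a + sum_list (map f xs))"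
    using Cons by (simp add: class_add_eq seqs_sum_list)
  finally show ?case by simp
qed

lemma sum_list_upt: "sum_list (map f [0..<n]) = (\<Sum>i<n. f i)"
  by (induction n) (auto simp: add.commute)

lemma gsum_classes_upt:
  assumes "\<And>i. i < n \<Longrightarrow> f i \<in> seqs G"
  shows "gsum (class_add G) (class_zero G) (map (\<lambda>i. seq_class G (f i)) [0..<n])
     = seq_class G (\<Sum>i<n. f i)"
  using gsum_classes[of "[0..<n]" f G] assms by (simp add: sum_list_upt)

lemma subsum_classes_upt:
  assumes "\<And>i. i < n \<Longrightarrow> f i \<in> seqs G" "\<Lambda> \<subseteq> {..<n}"
  shows "subsum (class_add G) (class_zero G) (map (\<lambda>i. seq_class G (f i)) [0..<n]) \<Lambda>
     = seq_class G (\<Sum>i\<in>\<Lambda>. f i)"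
proof -
  have fin: "finite \<Lambda>" using assms(2) finite_subset by blast
  have e1: "map ((!) (map (\<lambda>i. seq_class G (f i)) [0..<n])) (sorted_list_of_set \<Lambda>)
      = map (\<lambda>i. seq_class G (f i)) (sorted_list_of_set \<Lambda>)"
    using assms(2) fin by (intro map_cong) auto
  have e2: "gsum (class_add G) (class_zero G) (map (\<lambda>i. seq_class G (f i)) (sorted_list_of_set \<Lambda>))
      = seq_class G (sum_list (map f (sorted_list_of_set \<Lambda>)))"
    using assms fin by (intro gsum_classes) auto
  have e3: "sum_list (map f (sorted_list_of_set \<Lambda>)) = (\<Sum>i\<in>\<Lambda>. f i)"
    using fin by (simp add: sum_list_distinct_conv_sum_set)
  show ?thesis by (simp only: subsum_def e1 e2 e3)
qed



lemma cover_lemma: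
  fixes f :: "nat \<Rightarrow> 'a multiset"
  assumes "finite I" "u \<subseteq># (\<Sum>i\<in>I. f i)"
  shows "\<exists>\<Omega>\<subseteq>I. card \<Omega> \<le> size u \<and> u \<subseteq># (\<Sum>i\<in>\<Omega>. f i)"
  using assms(2)
proof (induction u)
  case empty then show ?case by (intro exI[of _ "{}"]) auto
next
  case (add x u)
  then have "u \<subseteq># (\<Sum>i\<in>I. f i)" by (meson mset_subset_eq_insertD subset_mset.less_imp_le)
  then obtain \<Omega>' where \<Omega>': "\<Omega>' \<subseteq> I" "card \<Omega>' \<le> size u" "u \<subseteq># (\<Sum>i\<in>\<Omega>'. f i)"
    using add.IH by blast
  show ?case
  proof (cases "add_mset x u \<subseteq># (\<Sum>i\<in>\<Omega>'. f i)")
    case True then show ?thesis using \<Omega>' by (intro exI[of _ \<Omega>']) auto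
  next
    case False
    have le: "count (\<Sum>i\<in>\<Omega>'. f i) x \<le> count u x"
    proof (rule ccontr)
      assume "\<not> ?thesis"
      then have "add_mset x u \<subseteq># (\<Sum>i\<in>\<Omega>'. f i)" using \<Omega>'(3)
        unfolding subseteq_mset_def by (metis count_add_mset not_less_eq_eq)
      then show False using False by simp
    qed
    have fin': "finite \<Omega>'" using \<Omega>'(1) assms(1) finite_subset by blast
    have split: "(\<Sum>i\<in>I. f i) = (\<Sum>i\<in>I - \<Omega>'. f i) + (\<Sum>i\<in>\<Omega>'. f i)"
      using sum.subset_diff[OF \<Omega>'(1) assms(1)] by simp
    have "count (add_mset x u) x \<le> count (\<Sum>i\<in>I. f i) x"
      using add.prems by (simp only: subseteq_mset_def)
    then have "count (\<Sum>i\<in>I - \<Omega>'. f i) x > 0" using le unfolding split count_union by (simp add: count_add_mset del: count_greater_zero_iff)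
    then have "(\<Sum>i\<in>I - \<Omega>'. count (f i) x) \<noteq> 0" by (simp add: count_sum)
    then obtain i where i: "i \<in> I - \<Omega>'" "count (f i) x \<noteq> 0"
      by (meson sum.not_neutral_contains_not_neutral)
    then have i: "i \<in> I - \<Omega>'" "x \<in># f i" by auto
    have sumi: "(\<Sum>j\<in>insert i \<Omega>'. f j) = f i + (\<Sum>j\<in>\<Omega>'. f j)"
      using i fin' by simp
    have "add_mset x u \<subseteq># (\<Sum>j\<in>insert i \<Omega>'. f j)"
      unfolding sumi subseteq_mset_def
    proof
      fix y
      show "count (add_mset x u) y \<le> count (f i + (\<Sum>j\<in>\<Omega>'. f j)) y"
      proof (cases "y = x")
        case True
        have "count u x \<le> count (\<Sum>j\<in>\<Omega>'. f j) x" using \<Omega>'(3) by (simp add: subseteq_mset_def)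
        moreover have "count (f i) x \<ge> 1" using i by (simp add: Suc_le_eq)
        moreover have "count (add_mset x u) y = Suc (count u x)" using True by simp
        moreover have "count (f i + (\<Sum>j\<in>\<Omega>'. f j)) y = count (f i) x + count (\<Sum>j\<in>\<Omega>'. f j) x"
          using True by simp
        ultimately show ?thesis by linarith
      next
        case False
        then show ?thesis using \<Omega>'(3) by (simp add: subseteq_mset_def add_increasing)
      qed
    qed
    moreover have "card (insert i \<Omega>') \<le> size (add_mset x u)"
      using \<Omega>'(2) fin' by (simp add: card_insert_if)
    ultimately show ?thesis using i \<Omega>'(1) by (intro exI[of _ "insert i \<Omega>'"]) auto
  qed
qed



abbreviation "sdC G \<equiv> small_dav (class_sg G) (class_add G) (class_zero G)"

lemma small_dav_prop:
  assumes "sdC G \<noteq> \<infinity>"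
  shows "\<forall>cs. set cs \<subseteq> class_sg G \<longrightarrow>
      (\<exists>\<Omega> \<subseteq> {..<length cs}. enat (card \<Omega>) \<le> sdC G \<and>
         gsum (class_add G) (class_zero G) cs = subsum (class_add G) (class_zero G) cs \<Omega>)"
proof -
  let ?S = "{d :: enat. \<forall>cs. set cs \<subseteq> class_sg G \<longrightarrow>
      (\<exists>\<Omega> \<subseteq> {..<length cs}. enat (card \<Omega>) \<le> d \<and>
         gsum (class_add G) (class_zero G) cs = subsum (class_add G) (class_zero G) cs \<Omega>)}"
  have "?S \<noteq> {}"
  proof
    assume "?S = {}"
    then have "Inf ?S = \<infinity>" by (simp add: Inf_enat_def)
    then show False using assms unfolding small_dav_def by simp
  qed
  then have "Inf ?S \<in> ?S" by (meson ex_in_conv wellorder_InfI)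
  then show ?thesis unfolding small_dav_def by blast
qed

context group begin

lemma omega_elem_le:
  assumes u: "u \<in> atoms G" and fin: "sdC G \<noteq> \<infinity>"
  shows "omega_elem G u \<le> enat (size u) + sdC G"
  unfolding omega_elem_def
proof (rule Inf_lower, clarify)
  fix as assume asB: "set as \<subseteq> prod_one_seqs G" and dv: "bdvd G u (sum_list as)"
  define n where "n = length as"
  obtain c where c: "c \<in> prod_one_seqs G" "sum_list as = u + c" using dv by (auto simp: bdvd_def)
  have asi: "\<And>i. i < n \<Longrightarrow> as ! i \<in> prod_one_seqs G" using asB by (auto simp: n_def)
  have sall: "sum_list as = (\<Sum>i<n. as ! i)"
    by (simp add: sum_list_sum_nth n_def atLeast0LessThan)
  have "u \<subseteq># (\<Sum>i<n. as ! i)" using c sall by simp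
  then obtain \<Omega>1 where O1: "\<Omega>1 \<subseteq> {..<n}" "card \<Omega>1 \<le> size u" "u \<subseteq># (\<Sum>i\<in>\<Omega>1. as ! i)"
    using cover_lemma[of "{..<n}" u] by auto
  define W where "W = (\<Sum>i\<in>\<Omega>1. as ! i) - u"
  have W: "(\<Sum>i\<in>\<Omega>1. as ! i) = u + W" using O1(3) by (simp add: W_def)
  have Wseq: "W \<in> seqs G"
  proof -
    have "(\<Sum>i\<in>\<Omega>1. as ! i) \<in> seqs G" using O1(1) asi by (intro seqs_sum) (auto intro: B_in_seqs)
    then show ?thesis using W by (auto simp: seqs_def)
  qed
  define g where "g i = (if i \<in> \<Omega>1 then {#} else as ! i)" for i
  have gs: "\<And>i. i < n \<Longrightarrow> g i \<in> seqs G" using asi by (auto simp: g_def intro: B_in_seqs)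
  define cs where "cs = map (\<lambda>i. seq_class G (g i)) [0..<n]"
  have "set cs \<subseteq> class_sg G" using gs by (auto simp: cs_def class_sg_def)
  then obtain \<Lambda> where L: "\<Lambda> \<subseteq> {..<n}" "enat (card \<Lambda>) \<le> sdC G"
     "gsum (class_add G) (class_zero G) cs = subsum (class_add G) (class_zero G) cs \<Lambda>"
    using small_dav_prop[OF fin, rule_format, of cs] by (auto simp: cs_def)
  have "seq_class G (\<Sum>i<n. g i) = seq_class G (\<Sum>i\<in>\<Lambda>. g i)"
    using L(3) gsum_classes_upt[of n g G] subsum_classes_upt[of n g G \<Lambda>, OF _ L(1)] gs
    by (simp add: cs_def)
  then have eqv: "seq_equiv G (\<Sum>i<n. g i) (\<Sum>i\<in>\<Lambda>. g i)"
    using seq_class_eq_iff[of "\<Sum>i<n. g i" G] seqs_sum[of "{..<n}" g G] seqs_sum[of \<Lambda> g G] gs L(1)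
    by auto
  have gsplit: "(\<Sum>i\<in>I. g i) = (\<Sum>i\<in>I - \<Omega>1. as ! i)" if "finite I" for I
  proof -
    have "(\<Sum>i\<in>I. g i) = (\<Sum>i\<in>I - \<Omega>1. g i) + (\<Sum>i\<in>I \<inter> \<Omega>1. g i)"
      using that by (metis add.commute sum.Int_Diff)
    also have "(\<Sum>i\<in>I \<inter> \<Omega>1. g i) = 0" by (auto simp: g_def intro!: sum.neutral)
    also have "(\<Sum>i\<in>I - \<Omega>1. g i) = (\<Sum>i\<in>I - \<Omega>1. as ! i)" by (auto simp: g_def intro!: sum.cong)
    finally show ?thesis by simp
  qed
  have finO1: "finite \<Omega>1" using O1(1) finite_subset by blast
  have finL: "finite \<Lambda>" using L(1) finite_subset by blast
  have "(\<Sum>i<n. as ! i) = (\<Sum>i\<in>\<Omega>1. as ! i) + (\<Sum>i<n. g i)"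
    using sum.subset_diff[OF O1(1), of "\<lambda>i. as ! i"] gsplit[of "{..<n}"] by (simp add: add.commute)
  then have "u + c = u + W + (\<Sum>i<n. g i)" using c sall W by simp
  then have cW: "c = W + (\<Sum>i<n. g i)" by (simp add: add.assoc)
  have "(\<Sum>i<n. g i) + W \<in> prod_one_seqs G" using cW c by (simp add: add.commute)
  then have B2: "(\<Sum>i\<in>\<Lambda>. g i) + W \<in> prod_one_seqs G"
    using eqv Wseq unfolding seq_equiv_def by blast
  define \<Omega> where "\<Omega> = \<Omega>1 \<union> \<Lambda>"
  have sO: "(\<Sum>i\<in>\<Omega>. as ! i) = (\<Sum>i\<in>\<Omega>1. as ! i) + (\<Sum>i\<in>\<Lambda> - \<Omega>1. as ! i)"
  proof -
    have "\<Omega> = \<Omega>1 \<union> (\<Lambda> - \<Omega>1)" by (auto simp: \<Omega>_def)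
    then show ?thesis using finO1 finL sum.union_disjoint[of \<Omega>1 "\<Lambda> - \<Omega>1" "\<lambda>i. as ! i"]
      by (metis Diff_disjoint finite_Diff)
  qed
  have "(\<Sum>i\<in>\<Omega>. as ! i) = u + ((\<Sum>i\<in>\<Lambda>. g i) + W)"
    using sO W gsplit[OF finL] by (simp add: add_ac)
  then have "bdvd G u (\<Sum>i\<in>\<Omega>. as ! i)" using B2 by (auto simp: bdvd_def)
  moreover have "\<Omega> \<subseteq> {..<length as}" using O1(1) L(1) by (auto simp: \<Omega>_def n_def)
  moreover have "enat (card \<Omega>) \<le> enat (size u) + sdC G"
  proof -
    have "card \<Omega> \<le> card \<Omega>1 + card \<Lambda>" by (simp add: \<Omega>_def card_Un_le)
    then have "enat (card \<Omega>) \<le> enat (card \<Omega>1) + enat (card \<Lambda>)" by simp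
    also have "\<dots> \<le> enat (size u) + sdC G" using O1(2) L(2) by (intro add_mono) auto
    finally show ?thesis .
  qed
  ultimately show "\<exists>\<Omega>\<subseteq>{..<length as}. enat (card \<Omega>) \<le> enat (size u) + sdC G \<and>
      bdvd G u (\<Sum>i\<in>\<Omega>. as ! i)" by blast
qed

lemma omega_le_dav_plus:
  "omega_grp G \<le> davenport G + sdC G"
proof (cases "sdC G = \<infinity>")
  case True then show ?thesis by simp
next
  case False
  show ?thesis unfolding omega_grp_def
  proof (rule SUP_least)
    fix u assume u: "u \<in> atoms G"
    have "enat (size u) \<le> davenport G" unfolding davenport_def using u by (rule SUP_upper)
    then show "omega_elem G u \<le> davenport G + sdC G"
      using omega_elem_le[OF u False] by (meson add_right_mono order_trans)
  qed
qed

end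


definition mp :: "('a, 'b) monoid_scheme \<Rightarrow> 'a multiset \<Rightarrow> 'a" where
  "mp G S = plist G (SOME xs. mset xs = S)"

context comm_group begin

lemma plist_remove1: "x \<in> set ys \<Longrightarrow> set ys \<subseteq> carrier G \<Longrightarrow> plist G ys = x \<otimes> plist G (remove1 x ys)"
proof (induction ys)
  case (Cons y ys)
  show ?case
  proof (cases "x = y")
    case True then show ?thesis by simp
  next
    case False
    then have "plist G (y # ys) = y \<otimes> (x \<otimes> plist G (remove1 x ys))" using Cons by auto
    also have "\<dots> = x \<otimes> (y \<otimes> plist G (remove1 x ys))"
      using Cons.prems by (intro m_lcomm) (auto intro: plist_closed dest: in_set_remove1[THEN iffD1, rotated] set_remove1_subset[THEN subsetD])
    finally show ?thesis using False by simp
  qed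
qed simp

lemma plist_perm: "mset xs = mset ys \<Longrightarrow> set xs \<subseteq> carrier G \<Longrightarrow> plist G xs = plist G ys"
proof (induction xs arbitrary: ys)
  case Nil then show ?case by simp
next
  case (Cons x xs)
  have xy: "x \<in> set ys" using Cons.prems(1) by (metis list.set_intros(1) set_mset_mset)
  have ys: "set ys \<subseteq> carrier G" using Cons.prems by (metis set_mset_mset)
  have "mset xs = mset (remove1 x ys)" using Cons.prems(1) by (simp flip: Cons.prems(1))
  then have "plist G xs = plist G (remove1 x ys)" using Cons by auto
  then show ?case using plist_remove1[OF xy ys] by simp
qed

lemma mp_eq: "mset xs = S \<Longrightarrow> set_mset S \<subseteq> carrier G \<Longrightarrow> mp G S = plist G xs"
proof -
  assume a: "mset xs = S" "set_mset S \<subseteq> carrier G"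
  have "mset (SOME xs. mset xs = S) = S" using someI[of "\<lambda>ys. mset ys = S", OF a(1)] .
  then have "set (SOME xs. mset xs = S) \<subseteq> carrier G" using a by (metis set_mset_mset)
  then show ?thesis unfolding mp_def using a \<open>mset (SOME xs. mset xs = S) = S\<close>
    by (intro plist_perm) auto
qed

lemma mp_closed: "set_mset S \<subseteq> carrier G \<Longrightarrow> mp G S \<in> carrier G"
  by (metis ex_mset mp_eq plist_closed set_mset_mset)

lemma mp_add: "set_mset S \<subseteq> carrier G \<Longrightarrow> set_mset T \<subseteq> carrier G \<Longrightarrow> mp G (S + T) = mp G S \<otimes> mp G T"
proof -
  assume a: "set_mset S \<subseteq> carrier G" "set_mset T \<subseteq> carrier G"
  obtain xs ys where "mset xs = S" "mset ys = T" by (meson ex_mset)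
  then show ?thesis using a mp_eq[of "xs @ ys" "S + T"] mp_eq[of xs S] mp_eq[of ys T]
    by (auto simp: plist_append)
qed

lemma mp_single: "x \<in> carrier G \<Longrightarrow> mp G {#x#} = x"
  using mp_eq[of "[x]" "{#x#}"] by simp

lemma mp_add_mset: "x \<in> carrier G \<Longrightarrow> set_mset S \<subseteq> carrier G \<Longrightarrow> mp G (add_mset x S) = x \<otimes> mp G S"
  using mp_add[of "{#x#}" S] mp_single by simp

lemma mp_empty: "mp G {#} = \<one>"
  using mp_eq[of "[]" "{#}"] by simp

lemma B_iff_mp: "S \<in> prod_one_seqs G \<longleftrightarrow> set_mset S \<subseteq> carrier G \<and> mp G S = \<one>"
  unfolding mem_B using mp_eq by (metis ex_mset)

lemma B_cancel: "S \<in> prod_one_seqs G \<Longrightarrow> S + T \<in> prod_one_seqs G \<Longrightarrow> T \<in> prod_one_seqs G"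
proof -
  assume a: "S \<in> prod_one_seqs G" "S + T \<in> prod_one_seqs G"
  then have c: "set_mset S \<subseteq> carrier G" "set_mset T \<subseteq> carrier G" by (auto simp: B_iff_mp)
  then show ?thesis using a mp_add[OF c] by (simp add: B_iff_mp mp_closed)
qed

lemma mp_sum: "finite I \<Longrightarrow> (\<And>i. i \<in> I \<Longrightarrow> set_mset (F i) \<subseteq> carrier G) \<Longrightarrow>
  mp G (\<Sum>i\<in>I. F i) = mp G (\<Sum>i\<in>I. {#mp G (F i)#})"
proof (induction I rule: finite_induct)
  case empty then show ?case by simp
next
  case (insert a I)
  have c1: "set_mset (\<Sum>i\<in>I. F i) \<subseteq> carrier G" using insert.prems
    by (induction I rule: infinite_finite_induct) auto
  have c2: "set_mset (\<Sum>i\<in>I. {#mp G (F i)#}) \<subseteq> carrier G" using insert.prems mp_closed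
    by (induction I rule: infinite_finite_induct) auto
  show ?case using insert c1 c2 by (simp add: mp_add mp_closed mp_single mp_add_mset)
qed

end


context group begin

abbreviation "Dv \<equiv> derived G (carrier G)"

lemma Dv_normal: "Dv \<lhd> G" by (rule derived_self_is_normal)

lemma Dv_sub: "Dv \<subseteq> carrier G" using Dv_normal by (simp add: normal_def subgroup_def)

lemma Q_group: "group (G Mod Dv)" using normal.factorgroup_is_group[OF Dv_normal] .

lemma phi_carrier: "g \<in> carrier G \<Longrightarrow> Dv #> g \<in> carrier (G Mod Dv)"
  by (simp add: carrier_FactGroup)

lemma carrier_Q_ex: "Z \<in> carrier (G Mod Dv) \<Longrightarrow> \<exists>g \<in> carrier G. Z = Dv #> g"
  by (auto simp: carrier_FactGroup)

lemma phi_mult: "a \<in> carrier G \<Longrightarrow> b \<in> carrier G \<Longrightarrow>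
  Dv #> (a \<otimes> b) = (Dv #> a) \<otimes>\<^bsub>G Mod Dv\<^esub> (Dv #> b)"
  using normal.rcos_sum[OF Dv_normal] by simp

lemma one_Q: "\<one>\<^bsub>G Mod Dv\<^esub> = Dv #> \<one>"
  using Dv_sub by simp

lemma phi_comm: "a \<in> carrier G \<Longrightarrow> b \<in> carrier G \<Longrightarrow> Dv #> (a \<otimes> b) = Dv #> (b \<otimes> a)"
proof -
  assume a: "a \<in> carrier G" and b: "b \<in> carrier G"
  have sg: "subgroup Dv G" using Dv_normal by (simp add: normal_def)
  have "a \<otimes> b \<otimes> inv a \<otimes> inv b \<in> Dv"
    unfolding derived_def using a b by (intro generate.incl) blast
  moreover have "(a \<otimes> b) \<otimes> inv (b \<otimes> a) = a \<otimes> b \<otimes> inv a \<otimes> inv b"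
    using a b by (simp add: inv_mult_group m_assoc)
  ultimately have "a \<otimes> b \<in> Dv #> (b \<otimes> a)"
    using subgroup.rcos_module_rev[OF sg is_group, of "b \<otimes> a" "a \<otimes> b"] a b by simp
  then show ?thesis using repr_independence[of "a \<otimes> b" Dv "b \<otimes> a"] a b sg by simp
qed

lemma Q_comm: "comm_group (G Mod Dv)"
proof (rule group.group_comm_groupI[OF Q_group])
  fix x y assume "x \<in> carrier (G Mod Dv)" "y \<in> carrier (G Mod Dv)"
  then obtain a b where "a \<in> carrier G" "b \<in> carrier G" "x = Dv #> a" "y = Dv #> b"
    using carrier_Q_ex by blast
  then show "x \<otimes>\<^bsub>G Mod Dv\<^esub> y = y \<otimes>\<^bsub>G Mod Dv\<^esub> x"
    using phi_mult phi_comm by metis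
qed

lemma plist_phi: "set xs \<subseteq> carrier G \<Longrightarrow> plist (G Mod Dv) (map (\<lambda>g. Dv #> g) xs) = Dv #> plist G xs"
proof (induction xs)
  case Nil then show ?case using one_Q by simp
next
  case (Cons a xs) then show ?case using phi_mult[of a "plist G xs"] by simp
qed

lemma B_phi: "S \<in> prod_one_seqs G \<Longrightarrow> image_mset (\<lambda>g. Dv #> g) S \<in> prod_one_seqs (G Mod Dv)"
proof -
  assume S: "S \<in> prod_one_seqs G"
  then obtain xs where xs: "mset xs = S" "plist G xs = \<one>" "set xs \<subseteq> carrier G"
    by (auto simp: mem_B)
  show ?thesis unfolding mem_B using xs phi_carrier plist_phi[OF xs(3)] one_Q
    by (auto intro!: exI[of _ "map (\<lambda>g. Dv #> g) xs"])
qed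

end


lemma in_sum_singletons: "finite I \<Longrightarrow> j \<in> I \<Longrightarrow> f j \<in># (\<Sum>i\<in>I. {#f i#})"
  using sum.remove[of I j "\<lambda>i. {#f i#}"] by auto

abbreviation "ldC G \<equiv> large_dav (class_sg G) (class_add G) (class_zero G)"

context group begin

lemma dav_Q_le_large: "davenport (G Mod Dv) \<le> ldC G"
  unfolding davenport_def
proof (rule SUP_least)
  fix V assume V: "V \<in> atoms (G Mod Dv)"
  interpret Q: comm_group "G Mod Dv" by (rule Q_comm)
  have VB: "V \<in> prod_one_seqs (G Mod Dv)" and Vne: "V \<noteq> {#}" using V by (auto simp: atoms_def)
  then obtain vs where vs: "mset vs = V" "set vs \<subseteq> carrier (G Mod Dv)"
    by (auto simp: mem_B)
  define n where "n = length vs"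
  have nV: "n = size V" using vs(1)[symmetric] by (simp add: n_def)
  have n1: "n \<ge> 1" using Vne nV by (cases V) auto
  define r where "r Z = (SOME g. g \<in> carrier G \<and> Z = Dv #> g)" for Z
  have r: "r Z \<in> carrier G \<and> Z = Dv #> r Z" if "Z \<in> carrier (G Mod Dv)" for Z
    using carrier_Q_ex[OF that] unfolding r_def by (rule someI2_bex) auto
  define gs where "gs = map r vs"
  have gsc: "\<And>i. i < n \<Longrightarrow> gs ! i \<in> carrier G" and vsg: "\<And>i. i < n \<Longrightarrow> vs ! i = Dv #> gs ! i"
    using r vs(2) nth_mem[of _ vs] unfolding gs_def n_def by (simp_all add: subset_iff)
  define m where "m = n - 1"
  show "enat (size V) \<le> ldC G"
    unfolding large_dav_def
  proof (rule Inf_greatest, clarify)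
    fix l :: enat
    assume l1: "1 \<le> l" and lp: "\<forall>cs. set cs \<subseteq> class_sg G \<and> l \<le> enat (length cs) \<longrightarrow>
         (\<exists>\<Omega>\<subset>{..<length cs}. gsum (class_add G) (class_zero G) cs = subsum (class_add G) (class_zero G) cs \<Omega>)"
    show "enat (size V) \<le> l"
    proof (rule ccontr)
      assume "\<not> enat (size V) \<le> l"
      then have lm: "l \<le> enat m" using nV n1 unfolding m_def
        by (cases l) auto
      define f where "f i = {#gs ! i#}" for i
      have fs: "\<And>i. i < m \<Longrightarrow> f i \<in> seqs G" using gsc by (auto simp: f_def seqs_def m_def)
      define cs where "cs = map (\<lambda>i. seq_class G (f i)) [0..<m]"
      have "set cs \<subseteq> class_sg G" using fs by (auto simp: cs_def class_sg_def)
      then obtain \<Omega> where O: "\<Omega> \<subset> {..<m}"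
        "gsum (class_add G) (class_zero G) cs = subsum (class_add G) (class_zero G) cs \<Omega>"
        using lp[rule_format, of cs] lm by (auto simp: cs_def)
      have "seq_class G (\<Sum>i<m. f i) = seq_class G (\<Sum>i\<in>\<Omega>. f i)"
        using O(2) gsum_classes_upt[of m f G] subsum_classes_upt[of m f G \<Omega>] fs O(1)
        by (auto simp: cs_def)
      then have eqv: "seq_equiv G (\<Sum>i<m. f i) (\<Sum>i\<in>\<Omega>. f i)"
        using seq_class_eq_iff[of "\<Sum>i<m. f i" G] seqs_sum[of "{..<m}" f G] seqs_sum[of \<Omega> f G] fs O(1)
        by auto
      define t where "t = inv (plist G (take m gs))"
      have tk: "set (take m gs) \<subseteq> carrier G" using gsc
        by (auto simp: in_set_conv_nth m_def n_def gs_def)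
      have tc: "t \<in> carrier G" using tk by (simp add: t_def)
      have Sall: "(\<Sum>i<m. f i) = mset (take m gs)"
        using mset_sum_nth[of "take m gs"] n1[unfolded n_def] by (simp add: f_def m_def n_def gs_def min_def)
      have "(\<Sum>i<m. f i) + {#t#} \<in> prod_one_seqs G"
        unfolding Sall mem_B using tk tc
        by (auto intro!: exI[of _ "take m gs @ [t]"] simp: plist_append t_def)
      have SO: "(\<Sum>i\<in>\<Omega>. f i) + {#t#} \<in> prod_one_seqs G"
      proof -
        have "{#t#} \<in> seqs G" using tc by (simp add: seqs_def)
        then show ?thesis using eqv \<open>(\<Sum>i<m. f i) + {#t#} \<in> prod_one_seqs G\<close>
          unfolding seq_equiv_def by blast
      qed
      define C where "C = (\<Sum>i\<in>{..<m} - \<Omega>. f i)"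
      have SC: "(\<Sum>i<m. f i) = (\<Sum>i\<in>\<Omega>. f i) + C"
        using sum.subset_diff[of \<Omega> "{..<m}" f] O(1) by (auto simp: C_def add.commute)
      let ?phi = "image_mset (\<lambda>g. Dv #> g)"
      have B1: "?phi ((\<Sum>i\<in>\<Omega>. f i) + {#t#}) \<in> prod_one_seqs (G Mod Dv)" using B_phi[OF SO] .
      have "?phi ((\<Sum>i\<in>\<Omega>. f i) + {#t#}) + ?phi C \<in> prod_one_seqs (G Mod Dv)"
        using B_phi[OF \<open>(\<Sum>i<m. f i) + {#t#} \<in> prod_one_seqs G\<close>] unfolding SC by (simp add: add_ac)
      then have CB: "?phi C \<in> prod_one_seqs (G Mod Dv)" using Q.B_cancel[OF B1] by blast
      define C' where "C' = (\<Sum>i\<in>{..<m} - \<Omega>. {#vs ! i#})"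
      have CC': "?phi C = C'" unfolding C_def C'_def image_mset_sum f_def
        using vsg by (auto simp: m_def intro!: sum.cong)
      define D' where "D' = (\<Sum>i\<in>{..<n} - ({..<m} - \<Omega>). {#vs ! i#})"
      have VCD: "V = C' + D'"
      proof -
        have "V = (\<Sum>i<n. {#vs ! i#})" using mset_sum_nth[of vs] vs(1) by (simp add: n_def)
        also have "\<dots> = C' + D'"
        proof -
          have "{..<m} - \<Omega> \<subseteq> {..<n}" by (auto simp: m_def)
          from sum.subset_diff[OF this, of "\<lambda>i. {#vs ! i#}"] show ?thesis by (simp add: C'_def D'_def add.commute)
        qed
        finally show ?thesis .
      qed
      have C'B: "C' \<in> prod_one_seqs (G Mod Dv)" using CB by (simp only: CC')
      have "C' + D' \<in> prod_one_seqs (G Mod Dv)" using VB by (simp only: VCD)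
      then have D'B: "D' \<in> prod_one_seqs (G Mod Dv)" using Q.B_cancel[OF C'B] by blast
      have "C' = {#} \<or> D' = {#}" by (rule atomD[OF V C'B D'B VCD])
      moreover have "C' \<noteq> {#}"
      proof -
        obtain j where "j \<in> {..<m} - \<Omega>" using O(1) by blast
        then show ?thesis unfolding C'_def using in_sum_singletons[of "{..<m} - \<Omega>" j "\<lambda>i. vs ! i"] by auto
      qed
      moreover have "D' \<noteq> {#}"
      proof -
        have "m \<in> {..<n} - ({..<m} - \<Omega>)" using n1 by (auto simp: m_def)
        then show ?thesis unfolding D'_def using in_sum_singletons[of "{..<n} - ({..<m} - \<Omega>)" m "\<lambda>i. vs ! i"] by auto
      qed
      ultimately show False by blast
    qed
  qed
qed

end


lemma sub_sum_singletons:
  fixes n :: nat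
  shows "A \<subseteq># (\<Sum>i<n. {#f i#}) \<Longrightarrow> \<exists>\<Lambda>\<subseteq>{..<n}. A = (\<Sum>i\<in>\<Lambda>. {#f i#})"
proof (induction n arbitrary: A)
  case 0 then show ?case by auto
next
  case (Suc n)
  show ?case
  proof (cases "f n \<in># A")
    case True
    then have "A - {#f n#} \<subseteq># (\<Sum>i<n. {#f i#})" using Suc.prems
      by (simp add: subset_eq_diff_conv)
    then obtain \<Lambda> where L: "\<Lambda> \<subseteq> {..<n}" "A - {#f n#} = (\<Sum>i\<in>\<Lambda>. {#f i#})" using Suc.IH by blast
    have "n \<notin> \<Lambda>" using L by auto
    moreover have "finite \<Lambda>" using L finite_subset by blast
    ultimately have "(\<Sum>i\<in>insert n \<Lambda>. {#f i#}) = add_mset (f n) (A - {#f n#})" using L by simp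
    also have "\<dots> = A" using True by simp
    finally show ?thesis using L by (intro exI[of _ "insert n \<Lambda>"]) auto
  next
    case False
    have H: "A \<subseteq># add_mset (f n) (\<Sum>i<n. {#f i#})" using Suc.prems by simp
    have "A \<subseteq># (\<Sum>i<n. {#f i#})"
      unfolding subseteq_mset_def
    proof
      fix x
      show "count A x \<le> count (\<Sum>i<n. {#f i#}) x"
      proof (cases "x = f n")
        case True then have "count A x = 0" using False by (simp add: count_eq_zero_iff)
        then show ?thesis by simp
      next
        case False
        then show ?thesis using H unfolding subseteq_mset_def by (metis count_add_mset)
      qed
    qed
    then obtain \<Lambda> where "\<Lambda> \<subseteq> {..<n}" "A = (\<Sum>i\<in>\<Lambda>. {#f i#})" using Suc.IH by blast
    then show ?thesis by (intro exI[of _ \<Lambda>]) auto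
  qed
qed

context comm_group begin

lemma Dv_one: "Dv = {\<one>}" by (rule derived_eq_singleton) simp

lemma phi_single: "g \<in> carrier G \<Longrightarrow> Dv #> g = {g}"
  by (simp add: Dv_one r_coset_def)

lemma pullback_B:
  assumes M: "set_mset M \<subseteq> carrier G" and B: "image_mset (\<lambda>g. Dv #> g) M \<in> prod_one_seqs (G Mod Dv)"
  shows "M \<in> prod_one_seqs G"
proof -
  obtain qs where qs: "mset qs = image_mset (\<lambda>g. Dv #> g) M" "plist (G Mod Dv) qs = \<one>\<^bsub>G Mod Dv\<^esub>"
    using B by (auto simp: mem_B)
  define ys where "ys = map the_elem qs"
  have ys_c: "set ys \<subseteq> carrier G" and qsys: "qs = map (\<lambda>g. Dv #> g) ys"
  proof -
    have H: "the_elem q \<in> carrier G \<and> q = Dv #> the_elem q" if "q \<in> set qs" for q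
    proof -
      have "q \<in># image_mset (\<lambda>g. Dv #> g) M" using that qs(1) by (metis set_mset_mset)
      then obtain g where "g \<in># M" "q = Dv #> g" by auto
      then show ?thesis using M phi_single by auto
    qed
    then show "set ys \<subseteq> carrier G" by (auto simp: ys_def)
    have "map (\<lambda>g. Dv #> g) ys = qs" unfolding ys_def map_map
      by (rule map_idI) (metis H comp_apply)
    then show "qs = map (\<lambda>g. Dv #> g) ys" by simp
  qed
  have "mset ys = image_mset the_elem (image_mset (\<lambda>g. Dv #> g) M)" using qs(1) by (simp add: ys_def)
  also have "\<dots> = M"
  proof -
    have "image_mset (the_elem \<circ> (\<lambda>g. Dv #> g)) M = image_mset id M"
      using M by (intro image_mset_cong) (auto simp: phi_single)
    then show ?thesis by (simp add: image_mset.compositionality)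
  qed
  finally have mys: "mset ys = M" .
  have "{plist G ys} = {\<one>}"
    using qs(2) plist_phi[OF ys_c] qsys one_Q phi_single[OF plist_closed[OF ys_c]] phi_single[OF one_closed]
    by simp
  then show ?thesis using mys M by (auto simp: mem_B)
qed

end


context comm_group begin

lemma one_atom_Q: "{#\<one>\<^bsub>G Mod Dv\<^esub>#} \<in> atoms (G Mod Dv)"
proof -
  interpret Q: group "G Mod Dv" by (rule Q_group)
  have p1: "plist (G Mod Dv) [\<one>\<^bsub>G Mod Dv\<^esub>] = \<one>\<^bsub>G Mod Dv\<^esub>"
    by (simp only: plist_Cons plist_Nil Q.r_one[OF Q.one_closed])
  have "{#\<one>\<^bsub>G Mod Dv\<^esub>#} \<in> prod_one_seqs (G Mod Dv)"
    unfolding mem_B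
  proof (intro conjI exI)
    show "set_mset {#\<one>\<^bsub>G Mod Dv\<^esub>#} \<subseteq> carrier (G Mod Dv)" using Q.one_closed by simp
    show "mset [\<one>\<^bsub>G Mod Dv\<^esub>] = {#\<one>\<^bsub>G Mod Dv\<^esub>#}" by simp
    show "plist (G Mod Dv) [\<one>\<^bsub>G Mod Dv\<^esub>] = \<one>\<^bsub>G Mod Dv\<^esub>" by (rule p1)
  qed
  moreover have "A = {#} \<or> B = {#}" if "{#\<one>\<^bsub>G Mod Dv\<^esub>#} = A + B" for A B :: "'a set multiset"
    using that by (metis single_is_union)
  ultimately show ?thesis by (auto simp: atoms_def)
qed

lemma large_le_dav_Q: "ldC G \<le> davenport (G Mod Dv)"
proof (cases "davenport (G Mod Dv)")
  case infinity then show ?thesis by simp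
next
  case (enat M)
  interpret Q: comm_group "G Mod Dv" by (rule Q_comm)
  have M1: "1 \<le> enat M"
  proof -
    have "enat (size {#\<one>\<^bsub>G Mod Dv\<^esub>#}) \<le> davenport (G Mod Dv)"
      unfolding davenport_def using one_atom_Q by (rule SUP_upper)
    then show ?thesis using enat by (simp add: one_enat_def)
  qed
  have main: "\<exists>\<Omega>\<subset>{..<length cs}. gsum (class_add G) (class_zero G) cs = subsum (class_add G) (class_zero G) cs \<Omega>"
    if cs: "set cs \<subseteq> class_sg G" and len: "enat M \<le> enat (length cs)" for cs
  proof -
    define n where "n = length cs"
    define S where "S i = (SOME S. S \<in> seqs G \<and> cs ! i = seq_class G S)" for i
    have S: "S i \<in> seqs G \<and> cs ! i = seq_class G (S i)" if "i < n" for i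
    proof -
      have "cs ! i \<in> class_sg G" using cs that by (auto simp: n_def)
      then obtain T where "T \<in> seqs G" "cs ! i = seq_class G T" by (auto simp: class_sg_def)
      then show ?thesis using someI[of "\<lambda>S. S \<in> seqs G \<and> cs ! i = seq_class G S" T]
        unfolding S_def by blast
    qed
    have Sc: "set_mset (S i) \<subseteq> carrier G" if "i < n" for i using S[OF that] by (simp add: seqs_def)
    have csS: "cs = map (\<lambda>i. seq_class G (S i)) [0..<n]"
      by (rule nth_equalityI) (auto simp: n_def S)
    define \<sigma> where "\<sigma> i = mp G (S i)" for i
    have \<sigma>c: "\<sigma> i \<in> carrier G" if "i < n" for i using mp_closed[OF Sc[OF that]] by (simp add: \<sigma>_def)
    show ?thesis
    proof (cases "\<exists>\<Lambda>\<subseteq>{..<n}. \<Lambda> \<noteq> {} \<and> (\<Sum>i\<in>\<Lambda>. {#\<sigma> i#}) \<in> prod_one_seqs G")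
      case True
      then obtain \<Lambda> where L: "\<Lambda> \<subseteq> {..<n}" "\<Lambda> \<noteq> {}" "(\<Sum>i\<in>\<Lambda>. {#\<sigma> i#}) \<in> prod_one_seqs G" by blast
      have finL: "finite \<Lambda>" using L(1) finite_subset by blast
      define \<Omega> where "\<Omega> = {..<n} - \<Lambda>"
      have Op: "\<Omega> \<subset> {..<n}" using L by (auto simp: \<Omega>_def)
      have LS: "(\<Sum>i\<in>\<Lambda>. S i) \<in> prod_one_seqs G"
      proof -
        have c1: "set_mset (\<Sum>i\<in>\<Lambda>. S i) \<subseteq> carrier G"
          using seqs_sum[of \<Lambda> S G] S L(1) by (auto simp: seqs_def)
        have "mp G (\<Sum>i\<in>\<Lambda>. S i) = mp G (\<Sum>i\<in>\<Lambda>. {#\<sigma> i#})"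
          using mp_sum[OF finL, of S] Sc L(1) by (auto simp: \<sigma>_def)
        also have "\<dots> = \<one>" using L(3) by (simp add: B_iff_mp)
        finally show ?thesis using c1 by (simp add: B_iff_mp)
      qed
      have split: "(\<Sum>i<n. S i) = (\<Sum>i\<in>\<Omega>. S i) + (\<Sum>i\<in>\<Lambda>. S i)"
        using sum.subset_diff[OF L(1), of S] by (simp add: \<Omega>_def)
      have "seq_equiv G (\<Sum>i<n. S i) (\<Sum>i\<in>\<Omega>. S i)"
        unfolding seq_equiv_def
      proof (intro ballI)
        fix T assume "T \<in> seqs G"
        show "(\<Sum>i<n. S i) + T \<in> prod_one_seqs G \<longleftrightarrow> (\<Sum>i\<in>\<Omega>. S i) + T \<in> prod_one_seqs G"
        proof
          assume "(\<Sum>i<n. S i) + T \<in> prod_one_seqs G"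
          then have "(\<Sum>i\<in>\<Lambda>. S i) + ((\<Sum>i\<in>\<Omega>. S i) + T) \<in> prod_one_seqs G"
            unfolding split by (simp add: add_ac)
          then show "(\<Sum>i\<in>\<Omega>. S i) + T \<in> prod_one_seqs G" using B_cancel[OF LS] by blast
        next
          assume "(\<Sum>i\<in>\<Omega>. S i) + T \<in> prod_one_seqs G"
          then have "(\<Sum>i\<in>\<Lambda>. S i) + ((\<Sum>i\<in>\<Omega>. S i) + T) \<in> prod_one_seqs G"
            using B_add[OF LS] by blast
          then show "(\<Sum>i<n. S i) + T \<in> prod_one_seqs G" unfolding split by (simp add: add_ac)
        qed
      qed
      moreover have Sseq: "\<And>i. i < n \<Longrightarrow> S i \<in> seqs G" using S by blast
      moreover have Osub: "\<Omega> \<subseteq> {..<n}" using Op by blast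
      ultimately have e1: "seq_class G (\<Sum>i<n. S i) = seq_class G (\<Sum>i\<in>\<Omega>. S i)"
        using seq_class_eq_iff[of "\<Sum>i<n. S i" G "\<Sum>i\<in>\<Omega>. S i"] seqs_sum[of "{..<n}" S G]
          seqs_sum[of \<Omega> S G] by blast
      have e2: "gsum (class_add G) (class_zero G) cs = seq_class G (\<Sum>i<n. S i)"
        unfolding csS by (rule gsum_classes_upt[OF Sseq])
      have e3: "subsum (class_add G) (class_zero G) cs \<Omega> = seq_class G (\<Sum>i\<in>\<Omega>. S i)"
        unfolding csS by (rule subsum_classes_upt[OF Sseq Osub])
      have "\<Omega> \<subset> {..<length cs}" using Op by (simp add: n_def)
      then show ?thesis using e1 e2 e3 by metis
    next
      case False
      define P0 where "P0 = (\<Sum>i<n. {#\<sigma> i#})"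
      have "P0 \<in> seqs G" unfolding P0_def
        by (rule seqs_sum) (use \<sigma>c in \<open>simp add: seqs_def\<close>)
      then have P0c: "set_mset P0 \<subseteq> carrier G" by (simp add: seqs_def)
      define t where "t = inv (mp G P0)"
      have tc: "t \<in> carrier G" using mp_closed[OF P0c] by (simp add: t_def)
      have P0t: "P0 + {#t#} \<in> prod_one_seqs G"
      proof -
        have c: "set_mset {#t#} \<subseteq> carrier G" using tc by simp
        have "mp G (P0 + {#t#}) = mp G P0 \<otimes> t" using mp_add[OF P0c c] mp_single[OF tc] by simp
        also have "\<dots> = \<one>" unfolding t_def using mp_closed[OF P0c] by (rule r_inv)
        finally show ?thesis unfolding B_iff_mp using P0c tc by simp
      qed
      let ?phi = "image_mset (\<lambda>g. Dv #> g)"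
      define V where "V = ?phi (P0 + {#t#})"
      have VB: "V \<in> prod_one_seqs (G Mod Dv)" unfolding V_def by (rule B_phi[OF P0t])
      have claim: "A' = {#}" if A': "A' \<in> prod_one_seqs (G Mod Dv)" "A' \<subseteq># ?phi P0" for A'
      proof -
        define A0 where "A0 = image_mset the_elem A'"
        have inv0: "image_mset the_elem (?phi Y0) = Y0" if "set_mset Y0 \<subseteq> carrier G" for Y0
        proof -
          have "image_mset (the_elem \<circ> (\<lambda>g. Dv #> g)) Y0 = image_mset id Y0"
            using that by (intro image_mset_cong) (auto simp: phi_single)
          then show ?thesis by (simp add: image_mset.compositionality)
        qed
        have A0sub: "A0 \<subseteq># P0" unfolding A0_def using image_mset_subseteq_mono[OF A'(2), of the_elem] inv0[OF P0c] by simp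
        have A0c: "set_mset A0 \<subseteq> carrier G" using A0sub P0c by (meson mset_subset_eqD subsetD subsetI)
        have "?phi A0 = A'"
        proof -
          obtain R where R: "?phi P0 = A' + R" using A'(2) by (metis subset_mset.le_iff_add)
          have "?phi A0 = image_mset ((\<lambda>g. Dv #> g) \<circ> the_elem) A'" by (simp add: A0_def image_mset.compositionality)
          also have "\<dots> = image_mset id A'"
          proof (intro image_mset_cong)
            fix x assume "x \<in># A'"
            then have "x \<in># ?phi P0" using A'(2) by (meson mset_subset_eqD)
            then obtain g where "g \<in># P0" "x = Dv #> g" by auto
            then show "((\<lambda>g. Dv #> g) \<circ> the_elem) x = id x" using P0c phi_single by auto
          qed
          finally show ?thesis by simp
        qed
        then have "A0 \<in> prod_one_seqs G" using pullback_B[OF A0c] A'(1) by simp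
        moreover obtain \<Lambda> where "\<Lambda> \<subseteq> {..<n}" and A0L: "A0 = (\<Sum>i\<in>\<Lambda>. {#\<sigma> i#})"
          using sub_sum_singletons[where A=A0 and n=n and f=\<sigma>] A0sub by (auto simp: P0_def)
        ultimately have "\<Lambda> = {}" using False by (metis A0L)
        then have "A0 = {#}" using A0L by simp
        then show ?thesis by (simp add: A0_def)
      qed
      have "V \<in> atoms (G Mod Dv)"
        unfolding atoms_def
      proof (intro CollectI conjI ballI impI VB)
        show "V \<noteq> {#}" by (simp add: V_def)
        fix A B assume AB: "A \<in> prod_one_seqs (G Mod Dv)" "B \<in> prod_one_seqs (G Mod Dv)" "V = A + B"
        have V2: "V = add_mset (Dv #> t) (?phi P0)" by (simp add: V_def)
        have "Dv #> t \<in># V" using V2 by simp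
        then have "Dv #> t \<in># A \<or> Dv #> t \<in># B" using AB(3) by simp
        then show "A = {#} \<or> B = {#}"
        proof (elim disjE)
          assume "Dv #> t \<in># A"
          then obtain A1 where "A = add_mset (Dv #> t) A1" by (metis multi_member_split)
          then have "add_mset (Dv #> t) (A1 + B) = add_mset (Dv #> t) (?phi P0)" using AB(3) V2 by simp
          then have "A1 + B = ?phi P0" by simp
          then have "B \<subseteq># ?phi P0" by (metis mset_subset_eq_add_right)
          then show "A = {#} \<or> B = {#}" using claim AB(2) by blast
        next
          assume "Dv #> t \<in># B"
          then obtain B1 where "B = add_mset (Dv #> t) B1" by (metis multi_member_split)
          then have "add_mset (Dv #> t) (A + B1) = add_mset (Dv #> t) (?phi P0)" using AB(3) V2 by simp
          then have "A + B1 = ?phi P0" by simp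
          then have "A \<subseteq># ?phi P0" by (metis mset_subset_eq_add_left)
          then show "A = {#} \<or> B = {#}" using claim AB(1) by blast
        qed
      qed
      then have "enat (size V) \<le> enat M"
        using SUP_upper[of V "atoms (G Mod Dv)" "\<lambda>U. enat (size U)"] enat unfolding davenport_def by simp
      moreover have "size V = n + 1" by (simp add: V_def P0_def size_multiset_sum)
      ultimately show ?thesis using len by (simp add: n_def)
    qed
  qed
  show ?thesis unfolding large_dav_def using enat M1 main
    by (intro Inf_lower) auto
qed

end

theorem proposition5p12:
  fixes G :: "('a, 'b) monoid_scheme"
  assumes "group G" and "finite (carrier G)" and "order G \<ge> 3"
  shows "(davenport G \<le> omega_grp G \<and>
          omega_grp G \<le> davenport G + small_dav (class_sg G) (class_add G) (class_zero G)) \<and>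
         (davenport (G Mod derived G (carrier G))
             \<le> large_dav (class_sg G) (class_add G) (class_zero G) \<and>
          (comm_group G \<longrightarrow> davenport (G Mod derived G (carrier G))
             = large_dav (class_sg G) (class_add G) (class_zero G)))"
proof -
  interpret group G by (rule assms(1))
  have c3: "card (carrier G) \<ge> 3" using assms(3) by (simp add: order_def)
  have 1: "davenport G \<le> omega_grp G" by (rule dav_le_omega[OF assms(2) c3])
  have 2: "omega_grp G \<le> davenport G + small_dav (class_sg G) (class_add G) (class_zero G)"
    by (rule omega_le_dav_plus)
  have 3: "davenport (G Mod derived G (carrier G)) \<le> large_dav (class_sg G) (class_add G) (class_zero G)"
    by (rule dav_Q_le_large)
  have 4: "davenport (G Mod derived G (carrier G)) = large_dav (class_sg G) (class_add G) (class_zero G)"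
    if "comm_group G"
    using comm_group.large_le_dav_Q[OF that] 3 by (rule antisym[rotated])
  show ?thesis using 1 2 3 4 by blast
qed

end
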